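(* Let $\mathcal{D}\subseteq\mathbb{C}$ and let $F:\mathcal{D}\rightarrow M_{n\times n}(\mathbb{C})$ be defined by $F(x)=\sum_{k=0}^{p}A_k x^k$, where $A_k\in M_{n\times n}(\mathbb{C})$ for $k=0,1,\dots,p$. Let $\mathcal{Z}(\mathcal{D})=\{x\in\mathcal{D} : F(x) \text{ has a repeated eigenvalue}\}$. Then either $\mathcal{Z}(\mathcal{D})=\mathcal{D}$ or $\mathcal{Z}(\mathcal{D})$ is finite.
   Context: $M_{n\times n}(\mathbb{C})$ denotes the set of $n\times n$ complex matrices. A matrix has a repeated eigenvalue if some eigenvalue has algebraic multiplicity at least $2$. *)

theory Defs
  imports "Jordan_Normal_Form.Jordan_Normal_Form"
begin

definition mat_poly_eval :: "nat \<Rightarrow> nat \<Rightarrow> (nat \<Rightarrow> complex mat) \<Rightarrow> complex \<Rightarrow> complex mat" where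
  "mat_poly_eval n p A x = mat n n (\<lambda>(i,j). \<Sum>k = 0..p. A k $$ (i,j) * x ^ k)"

definition has_repeated_eigenvalue :: "complex mat \<Rightarrow> bool" where
  "has_repeated_eigenvalue M \<longleftrightarrow> (\<exists>a. order a (char_poly M) \<ge> 2)"

end

theory Submission imports Defs "Subresultants.Subresultant_Gcd" "HOL-Computational_Algebra.Fundamental_Theorem_Algebra" "HOL-Computational_Algebra.Field_as_Ring" begin

lemma rep_iff_gcd:
  fixes f :: "complex poly"
  assumes f: "f \<noteq> 0"
  shows "(\<exists>a. order a f \<ge> 2) \<longleftrightarrow> degree (gcd f (pderiv f)) \<noteq> 0"
proof
  assume "\<exists>a. order a f \<ge> 2"
  then obtain a where a: "order a f \<ge> 2" by blast
  have "order a f \<noteq> 0" using a by linarith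
  hence r: "poly f a = 0" using order_root[of f a] by blast
  have o1: "order a (pderiv f) \<noteq> 0" using order_pderiv[OF f r] a by linarith
  have r2: "poly (pderiv f) a = 0"
  proof (cases "pderiv f = 0")
    case True then show ?thesis by simp
  next
    case False then show ?thesis using order_root[of "pderiv f" a] o1 by blast
  qed
  have d1: "[:-a,1:] dvd f" using r poly_eq_0_iff_dvd by blast
  have d2: "[:-a,1:] dvd pderiv f" using r2 poly_eq_0_iff_dvd by blast
  have d: "[:-a,1:] dvd gcd f (pderiv f)" using d1 d2 by (rule gcd_greatest)
  have g: "gcd f (pderiv f) \<noteq> 0" using f by simp
  have "degree [:-a,1::complex:] \<le> degree (gcd f (pderiv f))" by (rule dvd_imp_degree_le[OF d g])
  moreover have "degree [:-a,1::complex:] = 1" by simp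
  ultimately show "degree (gcd f (pderiv f)) \<noteq> 0" by linarith
next
  assume d: "degree (gcd f (pderiv f)) \<noteq> 0"
  have "\<not> constant (poly (gcd f (pderiv f)))" using d constant_degree[of "gcd f (pderiv f)"] by simp
  then obtain a where a: "poly (gcd f (pderiv f)) a = 0"
    using fundamental_theorem_of_algebra by blast
  have l: "[:-a,1:] dvd gcd f (pderiv f)" using a poly_eq_0_iff_dvd by blast
  have "[:-a,1:] dvd f" using dvd_trans[OF l gcd_dvd1] .
  hence r: "poly f a = 0" using poly_eq_0_iff_dvd by blast
  have "[:-a,1:] dvd pderiv f" using dvd_trans[OF l gcd_dvd2] .
  hence r2: "poly (pderiv f) a = 0" using poly_eq_0_iff_dvd by blast
  have pd: "pderiv f \<noteq> 0"
  proof
    assume "pderiv f = 0"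
    hence "degree f = 0" using pderiv_eq_0_iff by blast
    then obtain c where "f = [:c:]" by (rule degree_eq_zeroE)
    thus False using r f by simp
  qed
  have "order a (pderiv f) \<noteq> 0" using r2 pd order_root[of "pderiv f" a] by blast
  hence "order a f \<ge> 2" using order_pderiv[OF f r] by linarith
  thus "\<exists>a. order a f \<ge> 2" by blast
qed

theorem theorem3p3:
  fixes n p :: nat and A :: "nat \<Rightarrow> complex mat" and D :: "complex set"
  assumes "\<And>k. k \<le> p \<Longrightarrow> A k \<in> carrier_mat n n"
  defines "Z \<equiv> {x \<in> D. has_repeated_eigenvalue (mat_poly_eval n p A x)}"
  shows "Z = D \<or> finite Z"
proof -
  define N :: "complex poly mat" where
    "N = mat n n (\<lambda>(i,j). \<Sum>k = 0..p. monom (A k $$ (i,j)) k)"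
  have Nc: "N \<in> carrier_mat n n" unfolding N_def by simp
  have ev: "mat_poly_eval n p A x = map_mat (\<lambda>c. poly c x) N" for x
    by (rule eq_matI) (auto simp: mat_poly_eval_def N_def poly_sum poly_monom)
  define CP where "CP = char_poly N"
  define R where "R = resultant CP (pderiv CP)"
  have cpx: "char_poly (mat_poly_eval n p A x) = map_poly (\<lambda>c. poly c x) CP" for x
    unfolding ev CP_def by (rule poly_hom.char_poly_hom[OF Nc])
  have Mc: "mat_poly_eval n p A x \<in> carrier_mat n n" for x
    unfolding mat_poly_eval_def by simp
  have dCP: "degree CP = n" unfolding CP_def using degree_monic_char_poly[OF Nc] by simp
  have dCPx: "degree (map_poly (\<lambda>c. poly c x) CP) = n" for x
    using degree_monic_char_poly[OF Mc[of x]] cpx[of x] by simp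
  have nz: "map_poly (\<lambda>c. poly c x) CP \<noteq> 0" for x
  proof -
    have "lead_coeff (map_poly (\<lambda>c. poly c x) CP) = 1"
      using degree_monic_char_poly[OF Mc[of x]] cpx[of x] by simp
    thus ?thesis by (metis coeff_0 zero_neq_one)
  qed
  have key: "poly R x = 0 \<longleftrightarrow> has_repeated_eigenvalue (mat_poly_eval n p A x)" for x
  proof -
    let ?f = "map_poly (\<lambda>c. poly c x) CP"
    have d1: "degree ?f = degree CP" using dCP dCPx by simp
    have "degree (map_poly (\<lambda>c. poly c x) (pderiv CP)) = degree (pderiv ?f)"
      by (simp only: poly_hom.map_poly_pderiv)
    also have "\<dots> = n - 1" by (simp only: degree_pderiv dCPx)
    also have "\<dots> = degree (pderiv CP)" by (simp only: degree_pderiv dCP)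
    finally have d2: "degree (map_poly (\<lambda>c. poly c x) (pderiv CP)) = degree (pderiv CP)" .
    have "poly R x = resultant ?f (map_poly (\<lambda>c. poly c x) (pderiv CP))"
      unfolding R_def by (rule poly_hom.resultant_map_poly[where a=x, OF d1 d2, symmetric])
    also have "\<dots> = resultant ?f (pderiv ?f)" by (simp only: poly_hom.map_poly_pderiv)
    finally have r: "poly R x = resultant ?f (pderiv ?f)" .
    have e1: "(poly R x = 0) = (degree (gcd ?f (pderiv ?f)) \<noteq> 0)"
      unfolding r by (rule resultant_0_gcd)
    have e2: "(\<exists>a. order a ?f \<ge> 2) = (degree (gcd ?f (pderiv ?f)) \<noteq> 0)"
      by (rule rep_iff_gcd[OF nz[of x]])
    have e3: "has_repeated_eigenvalue (mat_poly_eval n p A x) = (\<exists>a. order a ?f \<ge> 2)"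
      unfolding has_repeated_eigenvalue_def cpx[of x] by (rule refl)
    show ?thesis unfolding e1 e3 e2 by (rule refl)
  qed
  show ?thesis
  proof (cases "R = 0")
    case True
    thus ?thesis using key unfolding Z_def by auto
  next
    case False
    have "Z \<subseteq> {x. poly R x = 0}" using key unfolding Z_def by auto
    thus ?thesis using poly_roots_finite[OF False] finite_subset by blast
  qed
qed

end
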